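(* Suppose the standing assumptions (1)–(5) below hold, and that both the feature and all edges incident to the $g_n$-th node of the $n$-th training graph must be unlearned: the updated dataset is $\mathcal{D}'=(\mathbf{Z}',\mathbf{y})$ with $\mathbf{z}_i'=\mathbf{z}_i$ for $i<n$ and $\mathbf{z}_n'=\Phi(\mathbf{S}_n',\mathbf{x}_n')$, where $\mathbf{x}_n'$ agrees with $\mathbf{x}_n$ except $[\mathbf{x}_n']_{g_n}=0$, and $\mathbf{S}_n'$ is obtained from $\mathbf{S}_n$ by setting the $g_n$-th row and column to zero. Then the updated model $\mathbf{w}'=\mathbf{w}^\star+\mathbf{H}_{\mathbf{w}^\star}^{-1}\Delta$ satisfies $$\|\nabla L(\mathbf{w}',\mathcal{D}')\|\leq \frac{4\gamma_2 C_1^2F^3}{\lambda^2 n},\qquad F=\sqrt{\sum_{l=0}^{L-1}B^{2l}},$$ where $B$ is the upper frame constant of the graph wavelets used in the GST.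
   Context: Setting (graph classification). There are $n$ training graphs $\mathcal{G}_1,\dots,\mathcal{G}_n$. Graph $\mathcal{G}_i$ has $g_i$ nodes, a symmetric adjacency matrix $\mathbf{S}_i\in\mathbb{R}^{g_i\times g_i}$ (the graph shift operator), a node signal $\mathbf{x}_i\in\mathbb{R}^{g_i}$ (one scalar feature per node) and a label $y_i$. Graph scattering transform (GST). Fix positive integers $J,L$ and wavelet kernel functions $h_1,\dots,h_J:\mathbb{R}\to\mathbb{R}$. For a symmetric $\mathbf{S}=\mathbf{V}\mathbf{\Lambda}\mathbf{V}^T$ with eigenvalues $\lambda_1,\dots,\lambda_g$, set $\mathbf{H}_j(\mathbf{S})=\mathbf{V}\,\mathrm{diag}(h_j(\lambda_1),\dots,h_j(\lambda_g))\mathbf{V}^T$. The wavelets form a frame: there are constants $0<A\le B$ with $A^2\|\mathbf{x}\|^2\le\sum_{j=1}^J\|\mathbf{H}_j(\mathbf{S})\mathbf{x}\|^2\le B^2\|\mathbf{x}\|^2$ for all $\mathbf{x}$ (for all shift operators considered). Let $\rho$ be the entrywise absolute value. For a path $p=(j_1,\dots,j_l)$ with $j_k\in\{1,\dots,J\}$ and $0\le l\le L-1$, define $\Phi_{()}(\mathbf{S},\mathbf{x})=\mathbf{x}$ and $\Phi_{(j_1,\dots,j_l)}(\mathbf{S},\mathbf{x})=\rho\big(\mathbf{H}_{j_l}(\mathbf{S})\Phi_{(j_1,\dots,j_{l-1})}(\mathbf{S},\mathbf{x})\big)$, and the scalar coefficient $\phi_p(\mathbf{S},\mathbf{x})=U\Phi_p(\mathbf{S},\mathbf{x})$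 with the averaging operator $U=\frac{1}{g}\mathbf{1}^T$ ($g$ the number of nodes). The embedding $\Phi(\mathbf{S},\mathbf{x})\in\mathbb{R}^d$, $d=\sum_{l=0}^{L-1}J^l$, is the concatenation of all $\phi_p(\mathbf{S},\mathbf{x})$. Set $\mathbf{z}_i=\Phi(\mathbf{S}_i,\mathbf{x}_i)$, let $\mathbf{Z}$ have rows $\mathbf{z}_i^T$, and $\mathcal{D}=(\mathbf{Z},\mathbf{y})$. Learning and update. $\ell(s,y)$ is convex and twice differentiable in $s$; $\ell'$, $\ell''$ denote derivatives in $s$, and $\nabla$, $\nabla^2$ denote gradient/Hessian in $\mathbf{w}$. For a dataset $\mathcal{D}=(\mathbf{Z},\mathbf{y})$, $L(\mathbf{w},\mathcal{D})=\sum_{i=1}^n\big(\ell(\mathbf{w}^T\mathbf{z}_i,y_i)+\frac{\lambda}{2}\|\mathbf{w}\|^2\big)$ with $\lambda>0$, and $\mathbf{w}^\star=\arg\min_{\mathbf{w}}L(\mathbf{w},\mathcal{D})$. For the updated dataset $\mathcal{D}'$, set $\mathbf{H}_{\mathbf{w}^\star}=\nabla^2L(\mathbf{w}^\star,\mathcal{D}')$ and $\Delta=\nabla L(\mathbf{w}^\star,\mathcal{D})-\nabla L(\mathbf{w}^\star,\mathcal{D}')$. Norms are $\ell_2$ for vectors and operator norm for matrices. Standing assumptions: there are constants $C_1,C_2,\gamma_1,\gamma_2$ such that for every embedding $\mathbf{z}_i$ (of $\mathcal{D}$ or $\mathcal{D}'$) and every $\mathbf{w}\in\mathbb{R}^d$: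 (1) $\|\nabla\ell(\mathbf{w}^T\mathbf{z}_i,y_i)\|\le C_1$; (2) $|\ell'(\mathbf{w}^T\mathbf{z}_i,y_i)|\le C_2$; (3) $\ell'$ is $\gamma_1$-Lipschitz; (4) $\ell''$ is $\gamma_2$-Lipschitz; (5) the signals satisfy $|[\mathbf{x}_i]_j|\le1$ for all $i$ and all $j\in\{1,\dots,g_i\}$. *)

theory Defs
  imports "HOL-Analysis.Analysis"
begin

type_synonym gmat = "nat \<Rightarrow> nat \<Rightarrow> real"
type_synonym gvec = "nat \<Rightarrow> real"

definition gmv :: "nat \<Rightarrow> gmat \<Rightarrow> gvec \<Rightarrow> gvec" where
  "gmv g A x = (\<lambda>i. \<Sum>j<g. A i j * x j)"

definition gnorm :: "nat \<Rightarrow> gvec \<Rightarrow> real" where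
  "gnorm g x = sqrt (\<Sum>i<g. (x i)\<^sup>2)"

definition gsym :: "nat \<Rightarrow> gmat \<Rightarrow> bool" where
  "gsym g S \<longleftrightarrow> (\<forall>i<g. \<forall>j<g. S i j = S j i)"

text \<open>Spectral matrix function H(S) = V diag(h(lambda_1),...,h(lambda_g)) V^T, where
  S = V diag(lambda) V^T with V orthogonal (eigendecomposition of the symmetric S).\<close>
definition matfun :: "nat \<Rightarrow> (real \<Rightarrow> real) \<Rightarrow> gmat \<Rightarrow> gmat" where
  "matfun g h S = (SOME H. \<exists>V lam.
      (\<forall>i<g. \<forall>j<g. (\<Sum>k<g. V k i * V k j) = (if i = j then 1 else 0)) \<and>
      (\<forall>i<g. \<forall>j<g. S i j = (\<Sum>k<g. V i k * lam k * V j k)) \<and>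
      (\<forall>i j. H i j = (if i < g \<and> j < g then (\<Sum>k<g. V i k * h (lam k) * V j k) else 0)))"

fun scat :: "nat \<Rightarrow> (nat \<Rightarrow> real \<Rightarrow> real) \<Rightarrow> gmat \<Rightarrow> gvec \<Rightarrow> nat list \<Rightarrow> gvec" where
  "scat g h S x [] = x"
| "scat g h S x (j # js) = scat g h S (\<lambda>i. \<bar>gmv g (matfun g (h j) S) x i\<bar>) js"

definition scoef :: "nat \<Rightarrow> (nat \<Rightarrow> real \<Rightarrow> real) \<Rightarrow> gmat \<Rightarrow> gvec \<Rightarrow> nat list \<Rightarrow> real" where
  "scoef g h S x p = (1 / real g) * (\<Sum>i<g. scat g h S x p i)"

definition paths :: "nat \<Rightarrow> nat \<Rightarrow> nat list set" where
  "paths J L = {p. set p \<subseteq> {1..J} \<and> length p < L}"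

text \<open>GST embedding in R^d, coordinates indexed through a bijection idx : 'd -> paths.\<close>
definition gst :: "('d::finite \<Rightarrow> nat list) \<Rightarrow> nat \<Rightarrow> (nat \<Rightarrow> real \<Rightarrow> real) \<Rightarrow> gmat \<Rightarrow> gvec \<Rightarrow> real ^ 'd" where
  "gst idx g h S x = (\<chi> k. scoef g h S x (idx k))"

definition del_node_mat :: "nat \<Rightarrow> gmat \<Rightarrow> gmat" where
  "del_node_mat k S = (\<lambda>i j. if i = k \<or> j = k then 0 else S i j)"

definition del_node_vec :: "nat \<Rightarrow> gvec \<Rightarrow> gvec" where
  "del_node_vec k x = x(k := 0)"

definition grad :: "(real ^ 'd::finite \<Rightarrow> real) \<Rightarrow> real ^ 'd \<Rightarrow> real ^ 'd" where
  "grad f w = (\<chi> i. frechet_derivative f (at w) (axis i 1))"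

definition hess :: "(real ^ 'd::finite \<Rightarrow> real) \<Rightarrow> real ^ 'd \<Rightarrow> real ^ 'd ^ 'd" where
  "hess f w = matrix (frechet_derivative (grad f) (at w))"

definition risk :: "(real \<Rightarrow> 'y \<Rightarrow> real) \<Rightarrow> real \<Rightarrow> nat \<Rightarrow> (nat \<Rightarrow> real ^ 'd::finite) \<Rightarrow> (nat \<Rightarrow> 'y) \<Rightarrow> real ^ 'd \<Rightarrow> real" where
  "risk loss lam n z y w = (\<Sum>i=1..n. loss (w \<bullet> z i) (y i) + lam / 2 * (norm w)\<^sup>2)"

end

theory Submission
  imports Defs
begin

lemma grad_eq:
  fixes f :: "real ^ 'd::finite \<Rightarrow> real"
  assumes "(f has_derivative (\<lambda>v. v \<bullet> G)) (at w)"
  shows "grad f w = G"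
proof -
  have "frechet_derivative f (at w) = (\<lambda>v. v \<bullet> G)"
    using frechet_derivative_at[OF assms] by simp
  then show ?thesis unfolding grad_def by (simp add: vec_eq_iff inner_axis')
qed

lemma chain_inner:
  fixes z :: "real ^ 'd::finite"
  assumes "\<And>s. (\<phi> has_real_derivative \<phi>' s) (at s)"
  shows "((\<lambda>v. \<phi> (v \<bullet> z)) has_derivative (\<lambda>v. \<phi>' (w \<bullet> z) * (v \<bullet> z))) (at w)"
proof -
  have 1: "((\<lambda>v. v \<bullet> z) has_derivative (\<lambda>v. v \<bullet> z)) (at w)"
    by (intro bounded_linear_imp_has_derivative bounded_linear_inner_left)
  have 2: "(\<phi> has_derivative (\<lambda>t. \<phi>' (w \<bullet> z) * t)) (at (w \<bullet> z))"
    using assms[of "w \<bullet> z"] by (simp add: has_field_derivative_def)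
  from diff_chain_at[OF 1 2] show ?thesis by (simp add: o_def)
qed

lemma loss_grad:
  fixes z :: "real ^ 'd::finite"
  assumes "\<And>s yy. ((\<lambda>t. loss t yy) has_real_derivative l' s yy) (at s)"
  shows "grad (\<lambda>v. loss (v \<bullet> z) yy) w = l' (w \<bullet> z) yy *\<^sub>R z"
  apply (rule grad_eq)
  using chain_inner[of "\<lambda>t. loss t yy" "\<lambda>s. l' s yy" z w] assms
  by (simp add: inner_commute mult.commute)

definition Gr :: "(real \<Rightarrow> 'y \<Rightarrow> real) \<Rightarrow> real \<Rightarrow> nat \<Rightarrow> (nat \<Rightarrow> real ^ 'd::finite) \<Rightarrow> (nat \<Rightarrow> 'y) \<Rightarrow> real ^ 'd \<Rightarrow> real ^ 'd" where
  "Gr l' lam n z y w = (\<Sum>i=1..n. l' (w \<bullet> z i) (y i) *\<^sub>R z i + lam *\<^sub>R w)"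

lemma risk_deriv:
  fixes z :: "nat \<Rightarrow> real ^ 'd::finite"
  assumes "\<And>s yy. ((\<lambda>t. loss t yy) has_real_derivative l' s yy) (at s)"
  shows "(risk loss lam n z y has_derivative (\<lambda>v. v \<bullet> Gr l' lam n z y w)) (at w)"
proof -
  have nrm: "((\<lambda>w. lam / 2 * (norm w)\<^sup>2) has_derivative (\<lambda>v. v \<bullet> (lam *\<^sub>R w))) (at w)"
  proof -
    have "((\<lambda>w. lam / 2 * (w \<bullet> w)) has_derivative (\<lambda>v. lam / 2 * (w \<bullet> v + v \<bullet> w))) (at w)"
      by (auto intro!: derivative_eq_intros)
    moreover have "(\<lambda>v. lam / 2 * (w \<bullet> v + v \<bullet> w)) = (\<lambda>v. v \<bullet> (lam *\<^sub>R w))"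
      by (auto simp: inner_commute algebra_simps)
    ultimately show ?thesis by (simp add: power2_norm_eq_inner)
  qed
  have li: "((\<lambda>v. loss (v \<bullet> z i) (y i)) has_derivative (\<lambda>v. v \<bullet> (l' (w \<bullet> z i) (y i) *\<^sub>R z i))) (at w)" for i
    using chain_inner[of "\<lambda>t. loss t (y i)" "\<lambda>s. l' s (y i)" "z i" w] assms
    by (simp add: inner_commute mult.commute)
  have "((\<lambda>w. \<Sum>i=1..n. loss (w \<bullet> z i) (y i) + lam / 2 * (norm w)\<^sup>2) has_derivative
        (\<lambda>v. \<Sum>i=1..n. v \<bullet> (l' (w \<bullet> z i) (y i) *\<^sub>R z i) + v \<bullet> (lam *\<^sub>R w))) (at w)"
    by (intro has_derivative_sum has_derivative_add li nrm)
  moreover have "(\<lambda>v. \<Sum>i=1..n. v \<bullet> (l' (w \<bullet> z i) (y i) *\<^sub>R z i) + v \<bullet> (lam *\<^sub>R w)) = (\<lambda>v. v \<bullet> Gr l' lam n z y w)"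
    by (simp add: Gr_def inner_sum_right inner_add_right)
  ultimately show ?thesis unfolding risk_def by simp
qed

lemma risk_grad:
  fixes z :: "nat \<Rightarrow> real ^ 'd::finite"
  assumes "\<And>s yy. ((\<lambda>t. loss t yy) has_real_derivative l' s yy) (at s)"
  shows "grad (risk loss lam n z y) = Gr l' lam n z y"
  by (rule ext, rule grad_eq, rule risk_deriv, rule assms)

definition Hm :: "(real \<Rightarrow> 'y \<Rightarrow> real) \<Rightarrow> real \<Rightarrow> nat \<Rightarrow> (nat \<Rightarrow> real ^ 'd::finite) \<Rightarrow> (nat \<Rightarrow> 'y) \<Rightarrow> real ^ 'd \<Rightarrow> real ^ 'd \<Rightarrow> real ^ 'd" where
  "Hm l'' lam n z y w u = (\<Sum>i=1..n. (l'' (w \<bullet> z i) (y i) * (u \<bullet> z i)) *\<^sub>R z i + lam *\<^sub>R u)"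

lemma Gr_deriv:
  fixes z :: "nat \<Rightarrow> real ^ 'd::finite"
  assumes "\<And>s yy. ((\<lambda>t. l' t yy) has_real_derivative l'' s yy) (at s)"
  shows "(Gr l' lam n z y has_derivative Hm l'' lam n z y w) (at w)"
proof -
  have li: "((\<lambda>v. l' (v \<bullet> z i) (y i) *\<^sub>R z i) has_derivative (\<lambda>u. (l'' (w \<bullet> z i) (y i) * (u \<bullet> z i)) *\<^sub>R z i)) (at w)" for i
  proof -
    have "((\<lambda>v. l' (v \<bullet> z i) (y i)) has_derivative (\<lambda>u. l'' (w \<bullet> z i) (y i) * (u \<bullet> z i))) (at w)"
      using chain_inner[of "\<lambda>t. l' t (y i)" "\<lambda>s. l'' s (y i)" "z i" w] assms by simp
    then show ?thesis by (rule has_derivative_scaleR_left)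
  qed
  have lw: "((\<lambda>v. lam *\<^sub>R v) has_derivative (\<lambda>u. lam *\<^sub>R u)) (at w)"
    by (intro bounded_linear_imp_has_derivative bounded_linear_scaleR_right)
  show ?thesis unfolding Gr_def Hm_def[abs_def]
    by (intro has_derivative_sum has_derivative_add li lw)
qed

lemma hess_mult:
  fixes z :: "nat \<Rightarrow> real ^ 'd::finite"
  assumes "\<And>s yy. ((\<lambda>t. loss t yy) has_real_derivative l' s yy) (at s)"
    and "\<And>s yy. ((\<lambda>t. l' t yy) has_real_derivative l'' s yy) (at s)"
  shows "hess (risk loss lam n z y) w *v u = Hm l'' lam n z y w u"
proof -
  have d: "(Gr l' lam n z y has_derivative Hm l'' lam n z y w) (at w)"
    by (rule Gr_deriv, rule assms(2))
  have "frechet_derivative (grad (risk loss lam n z y)) (at w) = Hm l'' lam n z y w"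
    unfolding risk_grad[OF assms(1)] using frechet_derivative_at[OF d] by simp
  moreover have "linear (Hm l'' lam n z y w)"
    using has_derivative_linear[OF d] .
  ultimately show ?thesis unfolding hess_def
    by (simp add: matrix_works linear_linear)
qed

lemma deriv2_nonneg:
  assumes d1: "\<And>s. (f has_real_derivative f' s) (at s)"
    and d2: "\<And>s. (f' has_real_derivative f'' s) (at s)"
    and cv: "convex_on UNIV f"
  shows "f'' s \<ge> 0"
proof -
  have mono: "f' a \<le> f' b" if "a < b" for a b
  proof -
    have "f' a * (b - a) \<le> f b - f a"
      by (rule convex_on_imp_above_tangent[OF cv]) (use d1 in auto)
    moreover have "f' b * (a - b) \<le> f a - f b"
      by (rule convex_on_imp_above_tangent[OF cv]) (use d1 in auto)
    ultimately have "f' a * (b - a) \<le> f' b * (b - a)" by (simp add: algebra_simps)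
    then show ?thesis using that by simp
  qed
  show ?thesis
  proof (rule ccontr)
    assume "\<not> 0 \<le> f'' s"
    then have "f'' s < 0" by simp
    from DERIV_neg_dec_right[OF d2 this] obtain d where "d > 0" "\<forall>h>0. h < d \<longrightarrow> f' s > f' (s + h)" by blast
    then have "f' s > f' (s + d/2)" by auto
    moreover have "f' s \<le> f' (s + d/2)" using mono[of s "s + d/2"] \<open>d > 0\<close> by simp
    ultimately show False by simp
  qed
qed

lemma taylor1:
  assumes d2: "\<And>s. (f' has_real_derivative f'' s) (at s)"
    and lip: "\<And>s t. \<bar>f'' s - f'' t\<bar> \<le> g * \<bar>s - t\<bar>"
  shows "\<bar>f' (a + b) - f' a - f'' a * b\<bar> \<le> g * b\<^sup>2"
proof (cases "b = 0")
  case True then show ?thesis by simp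
next
  case False
  then consider "b > 0" | "b < 0" by linarith
  then show ?thesis
  proof cases
    case 1
    from MVT2[of a "a + b" f' f''] 1 d2 obtain c where c: "a < c" "c < a + b" "f' (a + b) - f' a = (a + b - a) * f'' c"
      by auto
    have "\<bar>f' (a + b) - f' a - f'' a * b\<bar> = \<bar>b\<bar> * \<bar>f'' c - f'' a\<bar>"
      using c(3) by (simp add: algebra_simps abs_mult[symmetric])
    also have "\<dots> \<le> \<bar>b\<bar> * (g * \<bar>c - a\<bar>)" by (intro mult_left_mono lip) auto
    also have "\<dots> \<le> \<bar>b\<bar> * (g * \<bar>b\<bar>)"
    proof -
      have "g \<ge> 0" using lip[of 1 0] by simp
      then show ?thesis using c 1 by (intro mult_left_mono) (auto intro!: mult_left_mono)
    qed
    finally show ?thesis by (simp add: power2_eq_square algebra_simps)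
  next
    case 2
    from MVT2[of "a + b" a f' f''] 2 d2 obtain c where c: "a + b < c" "c < a" "f' a - f' (a + b) = (a - (a + b)) * f'' c"
      by auto
    have "\<bar>f' (a + b) - f' a - f'' a * b\<bar> = \<bar>b\<bar> * \<bar>f'' c - f'' a\<bar>"
      using c(3) by (simp add: algebra_simps abs_mult[symmetric])
    also have "\<dots> \<le> \<bar>b\<bar> * (g * \<bar>c - a\<bar>)" by (intro mult_left_mono lip) auto
    also have "\<dots> \<le> \<bar>b\<bar> * (g * \<bar>b\<bar>)"
    proof -
      have "g \<ge> 0" using lip[of 1 0] by simp
      then show ?thesis using c 2 by (intro mult_left_mono) (auto intro!: mult_left_mono)
    qed
    finally show ?thesis by (simp add: power2_eq_square algebra_simps)
  qed
qed

lemma gnorm_sq: "(gnorm g v)\<^sup>2 = (\<Sum>i<g. (v i)\<^sup>2)"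
  unfolding gnorm_def by (simp add: sum_nonneg)

lemma gnorm_abs: "gnorm g (\<lambda>i. \<bar>v i\<bar>) = gnorm g v"
  unfolding gnorm_def by simp

definition Pl :: "nat \<Rightarrow> nat \<Rightarrow> nat list set" where
  "Pl J l = {xs. set xs \<subseteq> {1..J} \<and> length xs = l}"

lemma scat_layer:
  assumes fr: "\<And>v. (\<Sum>j=1..J. (gnorm g (gmv g (matfun g (h j) T) v))\<^sup>2) \<le> B\<^sup>2 * (gnorm g v)\<^sup>2"
  shows "(\<Sum>p\<in>Pl J l. (gnorm g (scat g h T x p))\<^sup>2) \<le> B ^ (2 * l) * (gnorm g x)\<^sup>2"
proof (induction l arbitrary: x)
  case 0
  have "Pl J 0 = {[]}" unfolding Pl_def by auto
  then show ?case by simp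
next
  case (Suc l)
  have e: "Pl J (Suc l) = (\<lambda>(xs, n). n # xs) ` (Pl J l \<times> {1..J})"
    unfolding Pl_def by (rule lists_length_Suc_eq)
  have inj: "inj_on (\<lambda>(xs, n). n # xs) (Pl J l \<times> {1..J})"
    by (auto simp: inj_on_def)
  have fin: "finite (Pl J l)" unfolding Pl_def by (rule finite_lists_length_eq) simp
  have "(\<Sum>p\<in>Pl J (Suc l). (gnorm g (scat g h T x p))\<^sup>2)
      = (\<Sum>(p, j)\<in>Pl J l \<times> {1..J}. (gnorm g (scat g h T x (j # p)))\<^sup>2)"
    unfolding e by (subst sum.reindex[OF inj]) (simp add: case_prod_unfold)
  also have "\<dots> = (\<Sum>p\<in>Pl J l. \<Sum>j=1..J. (gnorm g (scat g h T (\<lambda>i. \<bar>gmv g (matfun g (h j) T) x i\<bar>) p))\<^sup>2)"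
    by (simp add: sum.cartesian_product)
  also have "\<dots> = (\<Sum>j=1..J. \<Sum>p\<in>Pl J l. (gnorm g (scat g h T (\<lambda>i. \<bar>gmv g (matfun g (h j) T) x i\<bar>) p))\<^sup>2)"
    by (rule sum.swap)
  also have "\<dots> \<le> (\<Sum>j=1..J. B ^ (2 * l) * (gnorm g (gmv g (matfun g (h j) T) x))\<^sup>2)"
    by (intro sum_mono order_trans[OF Suc.IH]) (simp add: gnorm_abs)
  also have "\<dots> = B ^ (2 * l) * (\<Sum>j=1..J. (gnorm g (gmv g (matfun g (h j) T) x))\<^sup>2)"
    by (simp add: sum_distrib_left)
  also have "\<dots> \<le> B ^ (2 * l) * (B\<^sup>2 * (gnorm g x)\<^sup>2)"
    by (intro mult_left_mono fr) (simp add: power_mult)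
  also have "\<dots> = B ^ (2 * Suc l) * (gnorm g x)\<^sup>2"
    by (simp add: power_mult power2_eq_square)
  finally show ?case .
qed

lemma gst_norm:
  fixes idx :: "'d::finite \<Rightarrow> nat list"
  assumes fr: "\<And>v. (\<Sum>j=1..J. (gnorm g (gmv g (matfun g (h j) T) v))\<^sup>2) \<le> B\<^sup>2 * (gnorm g v)\<^sup>2"
    and g1: "g \<ge> 1" and xb: "\<And>j. j < g \<Longrightarrow> \<bar>x j\<bar> \<le> 1"
    and bij: "bij_betw idx UNIV (paths J L)"
  shows "norm (gst idx g h T x) \<le> sqrt (\<Sum>l<L. B ^ (2 * l))"
proof -
  have finP: "finite (paths J L)" using bij_betw_finite[OF bij] by simp
  have xg: "(gnorm g x)\<^sup>2 \<le> real g"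
  proof -
    have "(\<Sum>i<g. (x i)\<^sup>2) \<le> (\<Sum>i<g. 1)"
      by (intro sum_mono) (simp add: abs_square_le_1 xb)
    then show ?thesis by (simp add: gnorm_sq)
  qed
  have sc: "(scoef g h T x p)\<^sup>2 \<le> (gnorm g (scat g h T x p))\<^sup>2 / real g" for p
  proof -
    have "(\<Sum>i<g. scat g h T x p i)\<^sup>2 \<le> (\<Sum>i<g. (scat g h T x p i)\<^sup>2) * real g"
      using sum_squared_le_sum_of_squares[of "scat g h T x p" "{..<g}"] by (simp only: card_lessThan)
    then have "(\<Sum>i<g. scat g h T x p i)\<^sup>2 / (real g)\<^sup>2 \<le> (\<Sum>i<g. (scat g h T x p i)\<^sup>2) * real g / (real g)\<^sup>2"
      by (intro divide_right_mono) auto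
    then show ?thesis using g1 unfolding scoef_def gnorm_sq
      by (simp add: power2_eq_square power_divide field_simps)
  qed
  have "(norm (gst idx g h T x))\<^sup>2 = (\<Sum>k\<in>UNIV. (scoef g h T x (idx k))\<^sup>2)"
    unfolding power2_norm_eq_inner inner_vec_def gst_def by (simp add: power2_eq_square)
  also have "\<dots> = (\<Sum>p\<in>paths J L. (scoef g h T x p)\<^sup>2)"
    by (rule sum.reindex_bij_betw[OF bij])
  also have "\<dots> = (\<Sum>l<L. \<Sum>p\<in>{p \<in> paths J L. length p = l}. (scoef g h T x p)\<^sup>2)"
    by (rule sum.group[symmetric]) (use finP in \<open>auto simp: paths_def\<close>)
  also have "\<dots> = (\<Sum>l<L. \<Sum>p\<in>Pl J l. (scoef g h T x p)\<^sup>2)"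
    by (intro sum.cong refl) (auto simp: paths_def Pl_def)
  also have "\<dots> \<le> (\<Sum>l<L. \<Sum>p\<in>Pl J l. (gnorm g (scat g h T x p))\<^sup>2 / real g)"
    by (intro sum_mono sc)
  also have "\<dots> = (\<Sum>l<L. (\<Sum>p\<in>Pl J l. (gnorm g (scat g h T x p))\<^sup>2) / real g)"
    by (simp add: sum_divide_distrib)
  also have "\<dots> \<le> (\<Sum>l<L. B ^ (2 * l) * (gnorm g x)\<^sup>2 / real g)"
    by (intro sum_mono divide_right_mono scat_layer fr) auto
  also have "\<dots> \<le> (\<Sum>l<L. B ^ (2 * l))"
  proof (intro sum_mono)
    fix l
    have "B ^ (2 * l) * (gnorm g x)\<^sup>2 \<le> B ^ (2 * l) * real g"
      by (intro mult_left_mono xg) (simp add: power_mult)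
    then show "B ^ (2 * l) * (gnorm g x)\<^sup>2 / real g \<le> B ^ (2 * l)"
      using g1 by (simp add: divide_le_eq)
  qed
  finally show ?thesis by (rule real_le_rsqrt)
qed

theorem theorem4p3:
  fixes n J L :: nat
    and gs :: "nat \<Rightarrow> nat" and S :: "nat \<Rightarrow> gmat" and x :: "nat \<Rightarrow> gvec" and y :: "nat \<Rightarrow> 'y"
    and h :: "nat \<Rightarrow> real \<Rightarrow> real" and A B :: real
    and idx :: "'d::finite \<Rightarrow> nat list"
    and loss l' l'' :: "real \<Rightarrow> 'y \<Rightarrow> real"
    and lam C1 C2 \<gamma>1 \<gamma>2 :: real
    and wstar :: "real ^ 'd"
  defines "z \<equiv> (\<lambda>i. gst idx (gs i) h (S i) (x i))"
    and "z' \<equiv> (\<lambda>i. if i = n then gst idx (gs n) h (del_node_mat (gs n - 1) (S n)) (del_node_vec (gs n - 1) (x n))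
                      else gst idx (gs i) h (S i) (x i))"
    and "F \<equiv> sqrt (\<Sum>l<L. B ^ (2 * l))"
  assumes n_pos: "n \<ge> 1" and J_pos: "J \<ge> 1" and L_pos: "L \<ge> 1"
    and nodes: "\<And>i. 1 \<le> i \<Longrightarrow> i \<le> n \<Longrightarrow> gs i \<ge> 1"
    and symm: "\<And>i. 1 \<le> i \<Longrightarrow> i \<le> n \<Longrightarrow> gsym (gs i) (S i)"
    and idx_bij: "bij_betw idx UNIV (paths J L)"
    and frame_pos: "0 < A" "A \<le> B"
    and frame: "\<And>T g v. (\<exists>i. 1 \<le> i \<and> i \<le> n \<and> g = gs i \<and> T = S i) \<or> (g = gs n \<and> T = del_node_mat (gs n - 1) (S n)) \<Longrightarrow>
        A\<^sup>2 * (gnorm g v)\<^sup>2 \<le> (\<Sum>j=1..J. (gnorm g (gmv g (matfun g (h j) T) v))\<^sup>2)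
        \<and> (\<Sum>j=1..J. (gnorm g (gmv g (matfun g (h j) T) v))\<^sup>2) \<le> B\<^sup>2 * (gnorm g v)\<^sup>2"
    and lam_pos: "lam > 0"
    and loss_deriv: "\<And>s yy. ((\<lambda>t. loss t yy) has_real_derivative l' s yy) (at s)"
    and loss_deriv2: "\<And>s yy. ((\<lambda>t. l' t yy) has_real_derivative l'' s yy) (at s)"
    and loss_convex: "\<And>yy. convex_on UNIV (\<lambda>s. loss s yy)"
    and A1: "\<And>i w. 1 \<le> i \<Longrightarrow> i \<le> n \<Longrightarrow>
        norm (grad (\<lambda>v. loss (v \<bullet> z i) (y i)) w) \<le> C1 \<and> norm (grad (\<lambda>v. loss (v \<bullet> z' i) (y i)) w) \<le> C1"
    and A2: "\<And>i w. 1 \<le> i \<Longrightarrow> i \<le> n \<Longrightarrow>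
        \<bar>l' (w \<bullet> z i) (y i)\<bar> \<le> C2 \<and> \<bar>l' (w \<bullet> z' i) (y i)\<bar> \<le> C2"
    and A3: "\<And>s t yy. \<bar>l' s yy - l' t yy\<bar> \<le> \<gamma>1 * \<bar>s - t\<bar>"
    and A4: "\<And>s t yy. \<bar>l'' s yy - l'' t yy\<bar> \<le> \<gamma>2 * \<bar>s - t\<bar>"
    and A5: "\<And>i j. 1 \<le> i \<Longrightarrow> i \<le> n \<Longrightarrow> j < gs i \<Longrightarrow> \<bar>x i j\<bar> \<le> 1"
    and wstar_min: "\<And>w. risk loss lam n z y wstar \<le> risk loss lam n z y w"
  shows "norm (grad (risk loss lam n z' y)
            (wstar + matrix_inv (hess (risk loss lam n z' y) wstar)
                       *v (grad (risk loss lam n z y) wstar - grad (risk loss lam n z' y) wstar))) \<le> 4 * \<gamma>2 * C1\<^sup>2 * F ^ 3 / (lam\<^sup>2 * real n)"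
proof -
  have C1nn: "C1 \<ge> 0"
  proof -
    have "norm (grad (\<lambda>v. loss (v \<bullet> z n) (y n)) 0) \<le> C1" using A1[of n 0] n_pos by simp
    then show ?thesis by (rule order_trans[OF norm_ge_zero])
  qed
  have g2nn: "\<gamma>2 \<ge> 0" using A4[where s=1 and t=0] by (metis abs_ge_zero order_trans abs_one diff_zero mult.right_neutral)
  have l2nn: "l'' s yy \<ge> 0" for s yy
    by (rule deriv2_nonneg[OF loss_deriv loss_deriv2 loss_convex])
  have Fnn: "F \<ge> 0" unfolding F_def by (simp add: sum_nonneg power_mult)
  have zb: "norm (z' i) \<le> F" if i1: "1 \<le> i" and i2: "i \<le> n" for i
  proof (cases "i = n")
    case True
    have "norm (gst idx (gs n) h (del_node_mat (gs n - 1) (S n)) (del_node_vec (gs n - 1) (x n))) \<le> F"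
      unfolding F_def
    proof (rule gst_norm[OF _ _ _ idx_bij])
      show "(\<Sum>j = 1..J. (gnorm (gs n) (gmv (gs n) (matfun (gs n) (h j) (del_node_mat (gs n - 1) (S n))) v))\<^sup>2)
            \<le> B\<^sup>2 * (gnorm (gs n) v)\<^sup>2" for v
        using frame[of "gs n" "del_node_mat (gs n - 1) (S n)" v] by blast
      show "1 \<le> gs n" using nodes[of n] n_pos by simp
      show "\<bar>del_node_vec (gs n - 1) (x n) j\<bar> \<le> 1" if "j < gs n" for j
        using A5[of n j] n_pos that by (simp add: del_node_vec_def)
    qed
    then show ?thesis using True by (simp add: z'_def)
  next
    case False
    have "norm (gst idx (gs i) h (S i) (x i)) \<le> F"
      unfolding F_def
    proof (rule gst_norm[OF _ _ _ idx_bij])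
      show "(\<Sum>j = 1..J. (gnorm (gs i) (gmv (gs i) (matfun (gs i) (h j) (S i)) v))\<^sup>2)
            \<le> B\<^sup>2 * (gnorm (gs i) v)\<^sup>2" for v
        using frame[of "gs i" "S i" v] i1 i2 by blast
      show "1 \<le> gs i" using nodes[of i] i1 i2 by simp
      show "\<bar>x i j\<bar> \<le> 1" if "j < gs i" for j
        using A5[of i j] i1 i2 that by simp
    qed
    then show ?thesis using False by (simp add: z'_def)
  qed
  have G0: "Gr l' lam n z y wstar = 0"
  proof -
    have "(\<lambda>v. v \<bullet> Gr l' lam n z y wstar) = (\<lambda>v. 0)"
      by (rule differential_zero_maxmin[of wstar UNIV, OF _ _ risk_deriv[OF loss_deriv]]) (use wstar_min in auto)
    then have "Gr l' lam n z y wstar \<bullet> Gr l' lam n z y wstar = 0" by metis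
    then show ?thesis by simp
  qed
  define Hmat where "Hmat = hess (risk loss lam n z' y) wstar"
  have Hmv: "Hmat *v u = Hm l'' lam n z' y wstar u" for u
    unfolding Hmat_def by (rule hess_mult[OF loss_deriv loss_deriv2])
  have quad: "real n * lam * (norm u)\<^sup>2 \<le> u \<bullet> (Hmat *v u)" for u
  proof -
    have "u \<bullet> (Hmat *v u) = (\<Sum>i=1..n. l'' (wstar \<bullet> z' i) (y i) * (u \<bullet> z' i) * (u \<bullet> z' i) + lam * (norm u)\<^sup>2)"
      unfolding Hmv Hm_def by (simp add: inner_sum_right inner_add_right power2_norm_eq_inner)
    also have "\<dots> \<ge> (\<Sum>i=1..n. lam * (norm u)\<^sup>2)"
    proof (intro sum_mono)
      fix i
      have "0 \<le> l'' (wstar \<bullet> z' i) (y i) * ((u \<bullet> z' i) * (u \<bullet> z' i))"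
        by (rule mult_nonneg_nonneg[OF l2nn zero_le_square])
      then show "lam * (norm u)\<^sup>2 \<le> l'' (wstar \<bullet> z' i) (y i) * (u \<bullet> z' i) * (u \<bullet> z' i) + lam * (norm u)\<^sup>2"
        by (simp add: mult.assoc)
    qed
    finally show ?thesis by simp
  qed
  have inj0: "\<forall>u. Hmat *v u = 0 \<longrightarrow> u = 0"
  proof (intro allI impI)
    fix u assume "Hmat *v u = 0"
    then have "real n * lam * (norm u)\<^sup>2 \<le> 0" using quad[of u] by simp
    moreover have "real n * lam > 0" using n_pos lam_pos by simp
    ultimately have "(norm u)\<^sup>2 \<le> 0" using mult_le_cancel_left_pos[of "real n * lam" "(norm u)\<^sup>2" 0] by simp
    then show "u = 0" by simp
  qed
  have inv: "invertible Hmat"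
    using matrix_left_invertible_ker inj0 invertible_left_inverse by blast
  have HH: "Hmat ** matrix_inv Hmat = mat 1"
  proof -
    from inv obtain A' where "Hmat ** A' = mat 1 \<and> A' ** Hmat = mat 1" unfolding invertible_def by blast
    then show ?thesis unfolding matrix_inv_def by (rule someI2) simp
  qed
  define \<Delta> where "\<Delta> = Gr l' lam n z y wstar - Gr l' lam n z' y wstar"
  define \<delta> where "\<delta> = matrix_inv Hmat *v \<Delta>"
  have Hd: "Hmat *v \<delta> = \<Delta>" by (simp add: \<delta>_def matrix_vector_mul_assoc HH)
  have \<Delta>b: "norm \<Delta> \<le> 2 * C1"
  proof -
    define D where "D = l' (wstar \<bullet> z n) (y n) *\<^sub>R z n - l' (wstar \<bullet> z' n) (y n) *\<^sub>R z' n"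
    have "\<Delta> = (\<Sum>i=1..n. l' (wstar \<bullet> z i) (y i) *\<^sub>R z i - l' (wstar \<bullet> z' i) (y i) *\<^sub>R z' i)"
      unfolding \<Delta>_def Gr_def by (simp add: sum_subtractf[symmetric])
    also have "\<dots> = (\<Sum>i\<in>{1..n}. if i = n then D else 0)"
      by (intro sum.cong refl) (auto simp: D_def z_def z'_def)
    also have "\<dots> = D" using n_pos by simp
    finally have eD: "\<Delta> = D" .
    have g1: "grad (\<lambda>v. loss (v \<bullet> z n) (y n)) wstar = l' (wstar \<bullet> z n) (y n) *\<^sub>R z n"
      by (rule loss_grad[OF loss_deriv])
    have g2: "grad (\<lambda>v. loss (v \<bullet> z' n) (y n)) wstar = l' (wstar \<bullet> z' n) (y n) *\<^sub>R z' n"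
      by (rule loss_grad[OF loss_deriv])
    have "norm (l' (wstar \<bullet> z n) (y n) *\<^sub>R z n) \<le> C1"
      using A1[of n wstar] n_pos unfolding g1 by simp
    moreover have "norm (l' (wstar \<bullet> z' n) (y n) *\<^sub>R z' n) \<le> C1"
      using A1[of n wstar] n_pos unfolding g2 by simp
    ultimately show ?thesis unfolding eD D_def
      using norm_triangle_ineq4[of "l' (wstar \<bullet> z n) (y n) *\<^sub>R z n" "l' (wstar \<bullet> z' n) (y n) *\<^sub>R z' n"] by linarith
  qed
  have \<delta>b: "norm \<delta> \<le> 2 * C1 / (real n * lam)"
  proof -
    have npos: "real n * lam > 0" using n_pos lam_pos by simp
    have "real n * lam * (norm \<delta>)\<^sup>2 \<le> \<delta> \<bullet> \<Delta>" using quad[of \<delta>] Hd by simp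
    also have "\<dots> \<le> norm \<delta> * norm \<Delta>" by (rule norm_cauchy_schwarz)
    also have "\<dots> \<le> norm \<delta> * (2 * C1)" by (intro mult_left_mono \<Delta>b) simp
    finally have *: "real n * lam * (norm \<delta> * norm \<delta>) \<le> norm \<delta> * (2 * C1)" by (simp add: power2_eq_square)
    show ?thesis
    proof (cases "norm \<delta> = 0")
      case True then show ?thesis using C1nn npos by simp
    next
      case False
      then have "norm \<delta> > 0" by simp
      have "(real n * lam * norm \<delta>) * norm \<delta> \<le> (2 * C1) * norm \<delta>"
        using * by (simp add: algebra_simps)
      then have "real n * lam * norm \<delta> \<le> 2 * C1"
        by (rule mult_right_le_imp_le) (use \<open>norm \<delta> > 0\<close> in simp)
      then show ?thesis using npos by (subst pos_le_divide_eq) (auto simp: mult.commute)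
    qed
  qed
  define c where "c i = l' ((wstar + \<delta>) \<bullet> z' i) (y i) - l' (wstar \<bullet> z' i) (y i) - l'' (wstar \<bullet> z' i) (y i) * (\<delta> \<bullet> z' i)" for i
  have res: "Gr l' lam n z' y (wstar + \<delta>) = (\<Sum>i=1..n. c i *\<^sub>R z' i)"
  proof -
    have "Gr l' lam n z' y wstar + Hmat *v \<delta> = 0" using Hd G0 by (simp add: \<Delta>_def)
    then have "Gr l' lam n z' y (wstar + \<delta>) = Gr l' lam n z' y (wstar + \<delta>) - Gr l' lam n z' y wstar - Hm l'' lam n z' y wstar \<delta>"
      by (simp add: Hmv[symmetric] diff_diff_eq)
    also have "\<dots> = (\<Sum>i=1..n. c i *\<^sub>R z' i)"
      unfolding Gr_def Hm_def sum_subtractf[symmetric]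
      by (intro sum.cong refl) (simp add: c_def algebra_simps)
    finally show ?thesis .
  qed
  have tb: "norm (c i *\<^sub>R z' i) \<le> \<gamma>2 * (2 * C1 / (real n * lam))\<^sup>2 * F ^ 3" if "i \<in> {1..n}" for i
  proof -
    have ci: "\<bar>c i\<bar> \<le> \<gamma>2 * (\<delta> \<bullet> z' i)\<^sup>2"
      using taylor1[of "\<lambda>t. l' t (y i)" "\<lambda>t. l'' t (y i)" \<gamma>2 "wstar \<bullet> z' i" "\<delta> \<bullet> z' i"] loss_deriv2 A4
      by (simp add: c_def inner_add_left)
    have zi: "norm (z' i) \<le> F" using zb that by auto
    have "(\<delta> \<bullet> z' i)\<^sup>2 \<le> (norm \<delta> * norm (z' i))\<^sup>2"
      using Cauchy_Schwarz_ineq2[of \<delta> "z' i"] by (metis power2_abs power_mono abs_ge_zero)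
    also have "\<dots> \<le> (2 * C1 / (real n * lam) * F)\<^sup>2"
      by (intro power_mono mult_mono \<delta>b zi) (auto simp: C1nn lam_pos less_imp_le)
    finally have dz: "(\<delta> \<bullet> z' i)\<^sup>2 \<le> (2 * C1 / (real n * lam) * F)\<^sup>2" .
    have "norm (c i *\<^sub>R z' i) = \<bar>c i\<bar> * norm (z' i)" by simp
    also have "\<dots> \<le> (\<gamma>2 * (2 * C1 / (real n * lam) * F)\<^sup>2) * F"
      by (intro mult_mono order_trans[OF ci] mult_left_mono dz g2nn zi) (auto simp: g2nn)
    also have "\<dots> = \<gamma>2 * (2 * C1 / (real n * lam))\<^sup>2 * F ^ 3"
      by (simp add: power2_eq_square power3_eq_cube)
    finally show ?thesis .
  qed
  have "norm (grad (risk loss lam n z' y) (wstar + matrix_inv (hess (risk loss lam n z' y) wstar)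
            *v (grad (risk loss lam n z y) wstar - grad (risk loss lam n z' y) wstar)))
        = norm (\<Sum>i=1..n. c i *\<^sub>R z' i)"
    unfolding risk_grad[OF loss_deriv] res[symmetric] \<delta>_def \<Delta>_def Hmat_def ..
  also have "\<dots> \<le> (\<Sum>i=1..n. norm (c i *\<^sub>R z' i))" by (rule norm_sum)
  also have "\<dots> \<le> (\<Sum>i=1..n. \<gamma>2 * (2 * C1 / (real n * lam))\<^sup>2 * F ^ 3)" by (rule sum_mono[OF tb])
  also have "\<dots> = real n * (\<gamma>2 * (2 * C1 / (real n * lam))\<^sup>2 * F ^ 3)" by simp
  also have "\<dots> = 4 * \<gamma>2 * C1\<^sup>2 * F ^ 3 / (lam\<^sup>2 * real n)"
    using n_pos lam_pos by (simp add: power2_eq_square field_simps)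
  finally show ?thesis .
qed

end
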